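(* Let $X$ be a Hausdorff compactum, $G$ an abelian group, and $n\in\mathcal H_{X,G}$. Then there exist closed sets $F\subset K\subset X$ such that $K$ is an $(n-1)$-homology membrane spanned on $F$ for some nontrivial element of $H_{n-1}(F;G)$.
   Context: $H_k(\cdot;G)$ is reduced Čech homology; $i^k_{A,K}$ denotes the inclusion-induced homomorphism. $\mathcal H_{X,G}$ is the set of integers $k\ge1$ such that there exist a closed $F\subset X$ and a nontrivial $\gamma\in H_{k-1}(F;G)$ with $i^{k-1}_{F,X}(\gamma)=0$. For closed $B\subset K$, $K$ is an $(n-1)$-homology membrane spanned on $B$ for $\gamma\in H_{n-1}(B;G)$ if $i^{n-1}_{B,K}(\gamma)=0$ but $i^{n-1}_{B,K'}(\gamma)\ne0$ for every proper closed subset $K'\subsetneq K$ containing $B$. *)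

theory Defs
  imports "HOL-Analysis.Analysis"
begin

text \<open>Reduced Cech homology of (closed subsets of) a compact space, with coefficients
in an abelian group 'g, computed as the inverse limit over finite open covers of the
reduced ordered simplicial homology of the nerves.  A vertex of the nerve of a cover
is a member of the cover; an ordered k-simplex is a list of k+1 members with nonempty
common intersection.\<close>

definition ocover :: "'a topology \<Rightarrow> 'a set \<Rightarrow> 'a set set \<Rightarrow> bool" where
  "ocover T A U \<longleftrightarrow> finite U \<and> (\<forall>W\<in>U. openin (subtopology T A) W) \<and> \<Union>U = A"

definition nsimp :: "'a set set \<Rightarrow> nat \<Rightarrow> 'a set list \<Rightarrow> bool" where
  "nsimp U k s \<longleftrightarrow> length s = Suc k \<and> set s \<subseteq> U \<and> \<Inter>(set s) \<noteq> {}"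

definition chains :: "'a set set \<Rightarrow> nat \<Rightarrow> ('a set list \<Rightarrow> 'g::ab_group_add) set" where
  "chains U k = {c. \<forall>s. c s \<noteq> 0 \<longrightarrow> nsimp U k s}"

definition del_at :: "nat \<Rightarrow> 'b list \<Rightarrow> 'b list" where
  "del_at i s = take i s @ drop (Suc i) s"

text \<open>Boundary from degree k+1 to degree k.\<close>
definition bd :: "'a set set \<Rightarrow> nat \<Rightarrow> ('a set list \<Rightarrow> 'g::ab_group_add) \<Rightarrow> ('a set list \<Rightarrow> 'g)" where
  "bd U k c = (\<lambda>t. \<Sum>i\<in>{..Suc k}. \<Sum>s\<in>{s. nsimp U (Suc k) s \<and> del_at i s = t}.
                   (if even i then c s else - c s))"

text \<open>Reduced cycles: in degree 0 the kernel of the augmentation.\<close>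
definition cycles :: "'a set set \<Rightarrow> nat \<Rightarrow> ('a set list \<Rightarrow> 'g::ab_group_add) set" where
  "cycles U k = (case k of
      0 \<Rightarrow> {c \<in> chains U 0. (\<Sum>s\<in>{s. nsimp U 0 s}. c s) = 0}
    | Suc j \<Rightarrow> {c \<in> chains U (Suc j). bd U j c = (\<lambda>_. 0)})"

definition bdries :: "'a set set \<Rightarrow> nat \<Rightarrow> ('a set list \<Rightarrow> 'g::ab_group_add) set" where
  "bdries U k = bd U k ` chains U (Suc k)"

definition hclass :: "'a set set \<Rightarrow> nat \<Rightarrow> ('a set list \<Rightarrow> 'g::ab_group_add) \<Rightarrow> ('a set list \<Rightarrow> 'g) set" where
  "hclass U k z = {z'. z' \<in> cycles U k \<and> (\<lambda>s. z' s - z s) \<in> bdries U k}"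

definition hgroup :: "'a set set \<Rightarrow> nat \<Rightarrow> ('a set list \<Rightarrow> 'g::ab_group_add) set set" where
  "hgroup U k = hclass U k ` cycles U k"

definition chmap :: "'a set set \<Rightarrow> ('a set \<Rightarrow> 'a set) \<Rightarrow> nat \<Rightarrow> ('a set list \<Rightarrow> 'g::ab_group_add) \<Rightarrow> ('a set list \<Rightarrow> 'g)" where
  "chmap V p k c = (\<lambda>t. \<Sum>s\<in>{s. nsimp V k s \<and> map p s = t}. c s)"

definition hmap :: "'a set set \<Rightarrow> 'a set set \<Rightarrow> ('a set \<Rightarrow> 'a set) \<Rightarrow> nat \<Rightarrow> ('a set list \<Rightarrow> 'g::ab_group_add) set \<Rightarrow> ('a set list \<Rightarrow> 'g) set" where
  "hmap V U p k c = hclass U k (chmap V p k (SOME z. z \<in> c))"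

text \<open>Reduced Cech homology H_k(A;G): compatible families (threads) of homology classes
indexed by the finite open covers of A, compatible with all refinement projections.\<close>
definition cech :: "'a topology \<Rightarrow> 'a set \<Rightarrow> nat \<Rightarrow> ('a set set \<Rightarrow> ('a set list \<Rightarrow> 'g::ab_group_add) set) set" where
  "cech T A k = {h. (\<forall>U. \<not> ocover T A U \<longrightarrow> h U = {}) \<and>
                    (\<forall>U. ocover T A U \<longrightarrow> h U \<in> hgroup U k) \<and>
                    (\<forall>U V p. ocover T A U \<and> ocover T A V \<and> (\<forall>v\<in>V. p v \<in> U \<and> v \<subseteq> p v)
                        \<longrightarrow> hmap V U p k (h V) = h U)}"

definition czero :: "'a topology \<Rightarrow> 'a set \<Rightarrow> nat \<Rightarrow> ('a set set \<Rightarrow> ('a set list \<Rightarrow> 'g::ab_group_add) set)" where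
  "czero T A k = (\<lambda>U. if ocover T A U then bdries U k else {})"

definition incl :: "'a topology \<Rightarrow> 'a set \<Rightarrow> 'a set \<Rightarrow> nat \<Rightarrow> ('a set set \<Rightarrow> ('a set list \<Rightarrow> 'g::ab_group_add) set) \<Rightarrow> ('a set set \<Rightarrow> ('a set list \<Rightarrow> 'g) set)" where
  "incl T A B k \<gamma> = (\<lambda>U. if ocover T B U then
       hmap ((\<lambda>W. W \<inter> A) ` U) U (\<lambda>W. SOME W'. W' \<in> U \<and> W = W' \<inter> A) k (\<gamma> ((\<lambda>W. W \<inter> A) ` U))
     else {})"

definition HXG :: "'a topology \<Rightarrow> 'g::ab_group_add itself \<Rightarrow> nat set" where
  "HXG T G = {k. k \<ge> 1 \<and> (\<exists>F (\<gamma>::'a set set \<Rightarrow> ('a set list \<Rightarrow> 'g) set). closedin T F \<and>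
        \<gamma> \<in> cech T F (k - 1) \<and> \<gamma> \<noteq> czero T F (k - 1) \<and>
        incl T F (topspace T) (k - 1) \<gamma> = czero T (topspace T) (k - 1))}"

text \<open>K is an (n-1)-homology membrane spanned on B for \<gamma> \<in> H_{n-1}(B;G) (here k = n-1).\<close>
definition membrane :: "'a topology \<Rightarrow> 'a set \<Rightarrow> 'a set \<Rightarrow> nat \<Rightarrow> ('a set set \<Rightarrow> ('a set list \<Rightarrow> 'g::ab_group_add) set) \<Rightarrow> bool" where
  "membrane T B K k \<gamma> \<longleftrightarrow> closedin T B \<and> closedin T K \<and> B \<subseteq> K \<and>
     incl T B K k \<gamma> = czero T K k \<and>
     (\<forall>K'. closedin T K' \<and> B \<subseteq> K' \<and> K' \<subset> K \<longrightarrow> incl T B K' k \<gamma> \<noteq> czero T K' k)"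

end

theory Submission
  imports Defs
begin


definition sg :: "nat \<Rightarrow> 'g::ab_group_add \<Rightarrow> 'g" where
  "sg i x = (if even i then x else - x)"

lemma sg_sum: "sg i (sum f A) = sum (\<lambda>x. sg i (f x)) A"
  by (simp add: sg_def sum_negf)
lemma sg_if0: "sg i (if P then a else 0) = (if P then sg i a else 0)" by (simp add: sg_def)
lemma sg_sg: "sg i (sg l x) = sg (i + l) x" by (auto simp: sg_def)
lemma sg_0[simp]: "sg i 0 = 0" by (simp add: sg_def)
lemma sg_diff: "sg i (a - b) = sg i a - sg i b" by (simp add: sg_def)

lemma finite_nsimp: "finite U \<Longrightarrow> finite {s. nsimp U k s}"
proof -
  assume "finite U"
  have "{s. nsimp U k s} \<subseteq> {xs. set xs \<subseteq> U \<and> length xs = Suc k}"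
    by (auto simp: nsimp_def)
  then show ?thesis using finite_lists_length_eq[OF \<open>finite U\<close>] finite_subset by blast
qed

lemma bd_alt: "finite U \<Longrightarrow> bd U k c t =
   (\<Sum>i\<in>{..Suc k}. \<Sum>s\<in>{s. nsimp U (Suc k) s}. if del_at i s = t then sg i (c s) else 0)"
proof -
  assume U: "finite U"
  have e: "(\<Sum>s\<in>{s. nsimp U (Suc k) s \<and> del_at i s = t}. sg i (c s)) = (\<Sum>s\<in>{s. nsimp U (Suc k) s}. if del_at i s = t then sg i (c s) else 0)" for i
    using sum.inter_filter[OF finite_nsimp[OF U], where g="\<lambda>s. sg i (c s)" and P="\<lambda>s. del_at i s = t"] by simp
  have "bd U k c t = (\<Sum>i\<in>{..Suc k}. \<Sum>s\<in>{s. nsimp U (Suc k) s \<and> del_at i s = t}. sg i (c s))"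
    by (simp only: bd_def sg_def)
  also have "\<dots> = (\<Sum>i\<in>{..Suc k}. \<Sum>s\<in>{s. nsimp U (Suc k) s}. if del_at i s = t then sg i (c s) else 0)"
    by (rule sum.cong[OF refl], rule e)
  finally show ?thesis .
qed

lemma chmap_alt: "finite V \<Longrightarrow> chmap V p k c t =
   (\<Sum>s\<in>{s. nsimp V k s}. if map p s = t then c s else 0)"
proof -
  assume U: "finite V"
  show ?thesis
    using sum.inter_filter[OF finite_nsimp[OF U], where g=c and P="\<lambda>s. map p s = t"] by (simp add: chmap_def)
qed

lemma length_del_at: "i < length s \<Longrightarrow> length (del_at i s) = length s - 1"
  by (simp add: del_at_def)
lemma nth_del_at: "i < length s \<Longrightarrow> m < length s - 1 \<Longrightarrow> del_at i s ! m = (if m < i then s ! m else s ! Suc m)"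
  by (auto simp: del_at_def nth_append min_def)
lemma set_del_at: "set (del_at i s) \<subseteq> set s"
  by (auto simp: del_at_def dest: in_set_takeD in_set_dropD)
lemma map_del_at: "map f (del_at i s) = del_at i (map f s)"
  by (simp add: del_at_def take_map drop_map)
lemma del_del: "i < l \<Longrightarrow> l < length s \<Longrightarrow> del_at i (del_at l s) = del_at (l - 1) (del_at i s)"
  by (rule nth_equalityI) (auto simp: length_del_at nth_del_at)

lemma nsimp_del: "nsimp U (Suc k) s \<Longrightarrow> i \<le> Suc k \<Longrightarrow> nsimp U k (del_at i s)"
proof -
  assume a: "nsimp U (Suc k) s" "i \<le> Suc k"
  have "\<Inter>(set s) \<subseteq> \<Inter>(set (del_at i s))" using set_del_at by (rule Inter_anti_mono)
  then show ?thesis using a set_del_at[of i s] by (auto simp: nsimp_def length_del_at)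
qed

lemma nsimp_map: "(\<forall>v\<in>V. f v \<in> U \<and> v \<subseteq> f v) \<Longrightarrow> nsimp V k s \<Longrightarrow> nsimp U k (map f s)"
proof -
  assume a: "\<forall>v\<in>V. f v \<in> U \<and> v \<subseteq> f v" "nsimp V k s"
  have "\<Inter>(set s) \<subseteq> \<Inter>(set (map f s))" using a by (auto simp: nsimp_def)
  then show ?thesis using a by (auto simp: nsimp_def)
qed

lemma sum_fiber:
  assumes "finite S" "\<forall>u\<in>A. g u \<in> S"
  shows "(\<Sum>s\<in>S. \<Sum>u\<in>A. if g u = s then f u s else 0) = (\<Sum>u\<in>A. f u (g u))"
proof -
  have "(\<Sum>s\<in>S. \<Sum>u\<in>A. if g u = s then f u s else 0) = (\<Sum>u\<in>A. \<Sum>s\<in>S. if g u = s then f u s else 0)"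
    by (rule sum.swap)
  also have "\<dots> = (\<Sum>u\<in>A. f u (g u))"
    using assms by (intro sum.cong) (auto simp: sum.delta)
  finally show ?thesis .
qed

lemma cancel:
  fixes h :: "nat \<Rightarrow> nat \<Rightarrow> 'g::ab_group_add"
  assumes "\<And>i l. i < l \<Longrightarrow> l \<le> Suc (Suc j) \<Longrightarrow> h (l - 1) i = - h i l"
  shows "(\<Sum>i\<in>{..Suc j}. \<Sum>l\<in>{..Suc (Suc j)}. h i l) = 0"
proof -
  define P where "P = {..Suc j} \<times> {..Suc (Suc j)}"
  define A where "A = {x\<in>P. fst x < snd x}"
  define B where "B = {x\<in>P. snd x \<le> fst x}"
  have fP: "finite P" by (simp add: P_def)
  have "(\<Sum>i\<in>{..Suc j}. \<Sum>l\<in>{..Suc (Suc j)}. h i l) = (\<Sum>x\<in>P. h (fst x) (snd x))"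
    unfolding P_def sum.cartesian_product by (simp add: case_prod_beta)
  also have "\<dots> = (\<Sum>x\<in>A. h (fst x) (snd x)) + (\<Sum>x\<in>B. h (fst x) (snd x))"
  proof -
    have e: "P = A \<union> B" "A \<inter> B = {}" by (auto simp: A_def B_def)
    have "finite A" "finite B" using fP by (auto simp: A_def B_def)
    then show ?thesis by (subst e(1)) (rule sum.union_disjoint, auto simp: e(2))
  qed
  also have "(\<Sum>x\<in>B. h (fst x) (snd x)) = (\<Sum>x\<in>A. h (snd x - 1) (fst x))"
  proof -
    have "bij_betw (\<lambda>x. (snd x - 1, fst x)) A B"
      by (rule bij_betw_byWitness[where f'="\<lambda>x. (snd x, fst x + 1)"])
         (auto simp: A_def B_def P_def)
    then show ?thesis by (simp add: sum.reindex_bij_betw[symmetric])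
  qed
  also have "\<dots> = (\<Sum>x\<in>A. - h (fst x) (snd x))"
    using assms by (intro sum.cong) (auto simp: A_def P_def)
  finally show ?thesis by (simp add: sum_negf)
qed

lemma if_sum0: "(if P then sum f A else 0) = sum (\<lambda>x. if P then f x else 0) A" by simp

lemma if_if0: "(if P then (if Q then a else 0) else 0) = (if Q \<and> P then a else 0)" by simp

lemma swap3: "(\<Sum>a\<in>A. \<Sum>b\<in>B. \<Sum>c\<in>C. f a b c) = (\<Sum>b\<in>B. \<Sum>c\<in>C. \<Sum>a\<in>A. f a b c)"
proof -
  have "(\<Sum>a\<in>A. \<Sum>b\<in>B. \<Sum>c\<in>C. f a b c) = (\<Sum>b\<in>B. \<Sum>a\<in>A. \<Sum>c\<in>C. f a b c)"
    by (rule sum.swap)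
  also have "\<dots> = (\<Sum>b\<in>B. \<Sum>c\<in>C. \<Sum>a\<in>A. f a b c)"
    by (intro sum.cong refl, rule sum.swap)
  finally show ?thesis .
qed

lemma sg_shift: "0 < l \<Longrightarrow> sg (l - Suc 0 + i) x = - sg (i + l) x"
  by (cases l) (auto simp: sg_def)

lemma bdbd_pt:
  assumes U: "finite U"
  shows "bd U j (bd U (Suc j) c) t = 0"
proof -
  define S1 where "S1 = {s. nsimp U (Suc j) s}"
  define S2 where "S2 = {s. nsimp U (Suc (Suc j)) s}"
  have f1: "finite S1" "finite S2" using finite_nsimp[OF U] by (auto simp: S1_def S2_def)
  have step: "(\<Sum>s\<in>S1. if del_at i s = t then sg i (bd U (Suc j) c s) else 0) =
     (\<Sum>l\<in>{..Suc (Suc j)}. \<Sum>u\<in>S2. if del_at i (del_at l u) = t then sg (i+l) (c u) else 0)" for i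
  proof -
    have "(\<Sum>s\<in>S1. if del_at i s = t then sg i (bd U (Suc j) c s) else 0) =
      (\<Sum>s\<in>S1. \<Sum>l\<in>{..Suc (Suc j)}. \<Sum>u\<in>S2. if del_at l u = s \<and> del_at i s = t then sg (i+l) (c u) else 0)"
      by (intro sum.cong refl) (simp only: bd_alt[OF U] S2_def sg_sum sg_if0 sg_sg if_sum0 if_if0)
    also have "\<dots> = (\<Sum>l\<in>{..Suc (Suc j)}. \<Sum>u\<in>S2. \<Sum>s\<in>S1. if del_at l u = s \<and> del_at i s = t then sg (i+l) (c u) else 0)"
      by (rule swap3)
    also have "\<dots> = (\<Sum>l\<in>{..Suc (Suc j)}. \<Sum>u\<in>S2. if del_at i (del_at l u) = t then sg (i+l) (c u) else 0)"
    proof (intro sum.cong refl)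
      fix l u assume l: "l \<in> {..Suc (Suc j)}" and u: "u \<in> S2"
      have m: "del_at l u \<in> S1" using nsimp_del l u by (auto simp: S1_def S2_def)
      have "(\<Sum>s\<in>S1. if del_at l u = s \<and> del_at i s = t then sg (i+l) (c u) else 0) =
            (\<Sum>s\<in>S1. if del_at l u = s then (if del_at i (del_at l u) = t then sg (i+l) (c u) else 0) else 0)"
        by (intro sum.cong refl) auto
      also have "\<dots> = (if del_at i (del_at l u) = t then sg (i+l) (c u) else 0)"
        using f1 m by (simp add: sum.delta)
      finally show "(\<Sum>s\<in>S1. if del_at l u = s \<and> del_at i s = t then sg (i+l) (c u) else 0) =
            (if del_at i (del_at l u) = t then sg (i+l) (c u) else 0)" .
    qed
    finally show ?thesis .
  qed
  have "bd U j (bd U (Suc j) c) t = (\<Sum>i\<in>{..Suc j}. \<Sum>l\<in>{..Suc (Suc j)}. \<Sum>u\<in>S2. if del_at i (del_at l u) = t then sg (i+l) (c u) else 0)"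
    unfolding bd_alt[OF U, of j "bd U (Suc j) c" t] S1_def[symmetric] by (intro sum.cong refl step)
  also have "\<dots> = (\<Sum>i\<in>{..Suc j}. \<Sum>u\<in>S2. \<Sum>l\<in>{..Suc (Suc j)}. if del_at i (del_at l u) = t then sg (i+l) (c u) else 0)"
    by (intro sum.cong refl, rule sum.swap)
  also have "\<dots> = (\<Sum>u\<in>S2. \<Sum>i\<in>{..Suc j}. \<Sum>l\<in>{..Suc (Suc j)}. if del_at i (del_at l u) = t then sg (i+l) (c u) else 0)"
    by (rule sum.swap)
  also have "\<dots> = 0"
  proof (rule sum.neutral, rule ballI)
    fix u assume u: "u \<in> S2"
    then have len: "length u = Suc (Suc (Suc j))" by (simp add: S2_def nsimp_def)
    show "(\<Sum>i\<in>{..Suc j}. \<Sum>l\<in>{..Suc (Suc j)}. if del_at i (del_at l u) = t then sg (i+l) (c u) else 0) = 0"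
      apply (rule cancel)
      subgoal for i l
        using del_del[of i l u] len sg_shift[of l i "c u"] by auto
      done
  qed
  finally show ?thesis .
qed

lemma bdbd: "finite U \<Longrightarrow> bd U j (bd U (Suc j) c) = (\<lambda>_. 0)"
  using bdbd_pt by blast

lemma bd_aug:
  assumes U: "finite U"
  shows "(\<Sum>s\<in>{s. nsimp U 0 s}. bd U 0 c s) = 0"
proof -
  define S0 where "S0 = {s. nsimp U 0 s}"
  define S1 where "S1 = {s. nsimp U (Suc 0) s}"
  have f: "finite S0" "finite S1" using finite_nsimp[OF U] by (auto simp: S0_def S1_def)
  have "(\<Sum>s\<in>S0. bd U 0 c s) = (\<Sum>s\<in>S0. \<Sum>i\<in>{..Suc 0}. \<Sum>u\<in>S1. if del_at i u = s then sg i (c u) else 0)"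
    by (simp only: bd_alt[OF U] S1_def)
  also have "\<dots> = (\<Sum>i\<in>{..Suc 0}. \<Sum>u\<in>S1. \<Sum>s\<in>S0. if del_at i u = s then sg i (c u) else 0)"
    by (rule swap3)
  also have "\<dots> = (\<Sum>i\<in>{..Suc 0}. \<Sum>u\<in>S1. sg i (c u))"
  proof (intro sum.cong refl)
    fix i u assume "i \<in> {..Suc 0}" "u \<in> S1"
    then have "del_at i u \<in> S0" using nsimp_del by (auto simp: S0_def S1_def)
    then show "(\<Sum>s\<in>S0. if del_at i u = s then sg i (c u) else 0) = sg i (c u)"
      using f by (simp add: sum.delta)
  qed
  also have "\<dots> = 0" by (simp add: sg_def sum_negf)
  finally show ?thesis by (simp add: S0_def)
qed



definition smap :: "'a set set \<Rightarrow> 'a set set \<Rightarrow> ('a set \<Rightarrow> 'a set) \<Rightarrow> nat \<Rightarrow> bool" where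
  "smap V U f k \<longleftrightarrow> (\<forall>s. nsimp V k s \<longrightarrow> nsimp U k (map f s))"

lemma smap_ref: "(\<forall>v\<in>V. f v \<in> U \<and> v \<subseteq> f v) \<Longrightarrow> smap V U f k"
  using nsimp_map by (auto simp: smap_def)

lemma bd_sg: "bd U k c = (\<lambda>t. \<Sum>i\<in>{..Suc k}. \<Sum>s\<in>{s. nsimp U (Suc k) s \<and> del_at i s = t}. sg i (c s))"
  by (simp only: bd_def sg_def)

lemma bd_chains: "bd U k c \<in> chains U k"
proof -
  have "nsimp U k t" if "bd U k c t \<noteq> 0" for t
  proof -
    have "(\<Sum>i\<in>{..Suc k}. \<Sum>s\<in>{s. nsimp U (Suc k) s \<and> del_at i s = t}. sg i (c s)) \<noteq> 0"
      using that by (subst (asm) bd_sg)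
    then obtain i where i: "i \<in> {..Suc k}" and
      ne: "(\<Sum>s\<in>{s. nsimp U (Suc k) s \<and> del_at i s = t}. sg i (c s)) \<noteq> 0"
      using sum.neutral[where A="{..Suc k}" and g="\<lambda>i. (\<Sum>s\<in>{s. nsimp U (Suc k) s \<and> del_at i s = t}. sg i (c s))"] by blast
    have "{s. nsimp U (Suc k) s \<and> del_at i s = t} \<noteq> {}"
    proof
      assume "{s. nsimp U (Suc k) s \<and> del_at i s = t} = {}"
      then show False using ne by (simp only: sum.empty, simp)
    qed
    then obtain s where "nsimp U (Suc k) s" "del_at i s = t" by blast
    then show ?thesis using nsimp_del i by blast
  qed
  then show ?thesis by (auto simp: chains_def)
qed

lemma bd_diff: "bd U k (\<lambda>s. c s - d s) = (\<lambda>t. bd U k c t - bd U k d t)"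
  by (simp only: bd_sg sg_diff sum_subtractf)

lemma bd_zero: "bd U k (\<lambda>_. 0) = (\<lambda>_. 0)"
  by (simp only: bd_sg sg_0 sum.neutral_const)

lemma chains_diff: "c \<in> chains U k \<Longrightarrow> d \<in> chains U k \<Longrightarrow> (\<lambda>s. c s - d s) \<in> chains U k"
  unfolding chains_def by (simp add: mem_Collect_eq) (metis diff_self)

lemma chains_zero: "(\<lambda>_. 0) \<in> chains U k"
  by (auto simp: chains_def)

lemma bdries_zero: "(\<lambda>_. 0) \<in> bdries U k"
  unfolding bdries_def using bd_zero[of U k, symmetric] chains_zero[of U "Suc k"] by (rule image_eqI)

lemma bdries_diff: "x \<in> bdries U k \<Longrightarrow> y \<in> bdries U k \<Longrightarrow> (\<lambda>s. x s - y s) \<in> bdries U k"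
proof -
  assume "x \<in> bdries U k" "y \<in> bdries U k"
  then obtain c d where "c \<in> chains U (Suc k)" "d \<in> chains U (Suc k)" "x = bd U k c" "y = bd U k d"
    by (auto simp: bdries_def)
  then show ?thesis unfolding bdries_def using bd_diff[of U k c d] chains_diff[of c U "Suc k" d]
    by (rule_tac x="\<lambda>s. c s - d s" in image_eqI) auto
qed

lemma bdries_neg: "x \<in> bdries U k \<Longrightarrow> (\<lambda>s. - x s) \<in> bdries U k"
  using bdries_diff[OF bdries_zero, of x] by simp

lemma bdries_add: "x \<in> bdries U k \<Longrightarrow> y \<in> bdries U k \<Longrightarrow> (\<lambda>s. x s + y s) \<in> bdries U k"
  using bdries_diff[OF _ bdries_neg, of x U k y] by simp

lemma bdries_cycles: "finite U \<Longrightarrow> bdries U k \<subseteq> cycles U k"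
proof
  fix x assume U: "finite U" and x: "x \<in> bdries U k"
  then obtain c where c: "c \<in> chains U (Suc k)" "x = bd U k c" by (auto simp: bdries_def)
  show "x \<in> cycles U k"
  proof (cases k)
    case 0
    then show ?thesis using c bd_chains bd_aug[OF U] by (auto simp: cycles_def)
  next
    case (Suc j)
    then show ?thesis using c bd_chains bdbd[OF U] by (auto simp: cycles_def)
  qed
qed

lemma chmap_chains: "smap V U f k \<Longrightarrow> chmap V f k c \<in> chains U k"
proof -
  assume sm: "smap V U f k"
  have "nsimp U k t" if "chmap V f k c t \<noteq> 0" for t
  proof -
    have "{s. nsimp V k s \<and> map f s = t} \<noteq> {}"
    proof
      assume "{s. nsimp V k s \<and> map f s = t} = {}"
      then show False using that unfolding chmap_def by (simp only: sum.empty, simp)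
    qed
    then obtain s where "nsimp V k s" "map f s = t" by blast
    then show ?thesis using sm by (auto simp: smap_def)
  qed
  then show ?thesis by (auto simp: chains_def)
qed

lemma chmap_diff: "chmap V f k (\<lambda>s. c s - d s) = (\<lambda>t. chmap V f k c t - chmap V f k d t)"
  by (simp only: chmap_def sum_subtractf)

lemma chmap_cong: "(\<And>s. nsimp V k s \<Longrightarrow> map f s = map g s) \<Longrightarrow> chmap V f k c = chmap V g k c"
  unfolding chmap_def by (intro ext sum.cong) auto

lemma chmap_comp:
  assumes V: "finite V" and U: "finite U" and sm: "smap V U p k"
  shows "chmap U q k (chmap V p k z) = chmap V (q \<circ> p) k z"
proof
  fix t
  have "chmap U q k (chmap V p k z) t = (\<Sum>s\<in>{s. nsimp U k s}. \<Sum>u\<in>{s. nsimp V k s}.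
      if map p u = s then (if map q (map p u) = t then z u else 0) else 0)"
    unfolding chmap_alt[OF U, of q k _ t] chmap_alt[OF V] by (intro sum.cong refl, subst if_sum0, intro sum.cong refl, auto)
  also have "\<dots> = (\<Sum>u\<in>{s. nsimp V k s}. if map q (map p u) = t then z u else 0)"
    using sm by (intro sum_fiber finite_nsimp U) (auto simp: smap_def)
  also have "\<dots> = chmap V (q \<circ> p) k z t"
    unfolding chmap_alt[OF V] by simp
  finally show "chmap U q k (chmap V p k z) t = chmap V (q \<circ> p) k z t" .
qed

lemma swap_cong: "(\<And>u w. F u w = G w u) \<Longrightarrow> (\<Sum>u\<in>A. \<Sum>w\<in>B. F u w) = (\<Sum>w\<in>B. \<Sum>u\<in>A. G w u)"
  by (subst sum.swap) simp

lemma pushif: "(if P then sg i (\<Sum>u\<in>A. if Q u then c u else 0) else 0) = (\<Sum>u\<in>A. if Q u then (if P then sg i (c u) else 0) else 0)"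
proof (cases P)
  case True
  have "(\<Sum>u\<in>A. if Q u then (if P then sg i (c u) else 0) else 0) = (\<Sum>u\<in>A. sg i (if Q u then c u else 0))"
    by (rule sum.cong) (auto simp: True sg_if0)
  then show ?thesis using True by (simp only: if_True sg_sum)
next
  case False
  have "(\<Sum>u\<in>A. if Q u then (if P then sg i (c u) else 0) else 0) = (\<Sum>u\<in>A. 0)"
    by (rule sum.cong) (auto simp: False)
  then show ?thesis using False by simp
qed

lemma chmap_bd:
  assumes V: "finite V" and U: "finite U" and sm: "smap V U f (Suc k)"
  shows "chmap V f k (bd V k c) = bd U k (chmap V f (Suc k) c)"
proof
  fix t
  define S0 where "S0 = {s. nsimp V k s}"
  define S1 where "S1 = {s. nsimp V (Suc k) s}"
  define W1 where "W1 = {s. nsimp U (Suc k) s}"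
  have f: "finite S0" "finite S1" "finite W1" using finite_nsimp V U by (auto simp: S0_def S1_def W1_def)
  have "chmap V f k (bd V k c) t = (\<Sum>s\<in>S0. \<Sum>i\<in>{..Suc k}. \<Sum>u\<in>S1.
        if del_at i u = s \<and> map f s = t then sg i (c u) else 0)"
    unfolding chmap_alt[OF V] bd_alt[OF V] S0_def[symmetric] S1_def[symmetric]
    by (simp only: if_sum0 if_if0)
  also have "\<dots> = (\<Sum>i\<in>{..Suc k}. \<Sum>u\<in>S1. \<Sum>s\<in>S0.
        if del_at i u = s \<and> map f s = t then sg i (c u) else 0)" by (rule swap3)
  also have "\<dots> = (\<Sum>i\<in>{..Suc k}. \<Sum>u\<in>S1. if map f (del_at i u) = t then sg i (c u) else 0)"
  proof (intro sum.cong refl)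
    fix i u assume "i \<in> {..Suc k}" "u \<in> S1"
    then have m: "del_at i u \<in> S0" using nsimp_del by (auto simp: S0_def S1_def)
    have "(\<Sum>s\<in>S0. if del_at i u = s \<and> map f s = t then sg i (c u) else 0) =
          (\<Sum>s\<in>S0. if del_at i u = s then (if map f (del_at i u) = t then sg i (c u) else 0) else 0)"
      by (intro sum.cong refl) auto
    also have "\<dots> = (if map f (del_at i u) = t then sg i (c u) else 0)" using f m by (simp add: sum.delta)
    finally show "(\<Sum>s\<in>S0. if del_at i u = s \<and> map f s = t then sg i (c u) else 0) =
        (if map f (del_at i u) = t then sg i (c u) else 0)" .
  qed
  also have "\<dots> = (\<Sum>i\<in>{..Suc k}. \<Sum>u\<in>S1. \<Sum>w\<in>W1. if map f u = w then (if del_at i (map f u) = t then sg i (c u) else 0) else 0)"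
  proof (intro sum.cong refl)
    fix i u assume "u \<in> S1"
    then have m: "map f u \<in> W1" using sm by (auto simp: S1_def W1_def smap_def)
    then show "(if map f (del_at i u) = t then sg i (c u) else 0) =
      (\<Sum>w\<in>W1. if map f u = w then (if del_at i (map f u) = t then sg i (c u) else 0) else 0)"
      using f by (simp add: sum.delta map_del_at)
  qed
  also have "\<dots> = (\<Sum>i\<in>{..Suc k}. \<Sum>w\<in>W1. \<Sum>u\<in>S1. if map f u = w then (if del_at i w = t then sg i (c u) else 0) else 0)"
    by (rule sum.cong[OF refl], rule swap_cong, simp)
  also have "\<dots> = (\<Sum>i\<in>{..Suc k}. \<Sum>w\<in>W1. if del_at i w = t then sg i (\<Sum>u\<in>S1. if map f u = w then c u else 0) else 0)"
    by (rule sum.cong[OF refl], rule sum.cong[OF refl], rule pushif[symmetric])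
  also have "\<dots> = bd U k (chmap V f (Suc k) c) t"
    unfolding chmap_alt[OF V] bd_alt[OF U] S1_def W1_def ..
  finally show "chmap V f k (bd V k c) t = bd U k (chmap V f (Suc k) c) t" .
qed

lemma chmap_bdries:
  assumes V: "finite V" and U: "finite U" and sm: "smap V U f (Suc k)"
  shows "x \<in> bdries V k \<Longrightarrow> chmap V f k x \<in> bdries U k"
proof -
  assume "x \<in> bdries V k"
  then obtain c where "c \<in> chains V (Suc k)" "x = bd V k c" by (auto simp: bdries_def)
  then show ?thesis using chmap_bd[OF V U sm] chmap_chains[OF sm] by (auto simp: bdries_def)
qed



lemma hclass_bdries:
  fixes w :: "'a set list \<Rightarrow> 'g::ab_group_add"
  assumes U: "finite U" and w: "w \<in> bdries U k"
  shows "hclass U k w = bdries U k"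
proof
  show "hclass U k w \<subseteq> bdries U k"
  proof
    fix z :: "'a set list \<Rightarrow> 'g" assume "z \<in> hclass U k w"
    then have "(\<lambda>s. z s - w s) \<in> bdries U k" by (simp add: hclass_def)
    from bdries_add[OF this w] show "z \<in> bdries U k" by simp
  qed
  show "bdries U k \<subseteq> hclass U k w"
  proof
    fix z :: "'a set list \<Rightarrow> 'g" assume z: "z \<in> bdries U k"
    then show "z \<in> hclass U k w"
      using bdries_cycles[OF U] bdries_diff[OF z w] by (auto simp: hclass_def)
  qed
qed

lemma hclass_eq_bdries:
  assumes "hclass U k x = bdries U k"
  shows "x \<in> bdries U k"
proof -
  have "(\<lambda>_. 0) \<in> hclass U k x" using assms bdries_zero by blast
  then have "(\<lambda>s. 0 - x s) \<in> bdries U k" by (simp add: hclass_def)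
  from bdries_neg[OF this] show ?thesis by simp
qed

lemma hgroup_some:
  assumes "c \<in> hgroup U k"
  shows "(SOME z. z \<in> c) \<in> c" "c \<subseteq> chains U k"
proof -
  obtain c0 where c0: "c0 \<in> cycles U k" "c = hclass U k c0" using assms by (auto simp: hgroup_def)
  have "c0 \<in> c" using c0 bdries_zero[of U k] by (simp add: hclass_def)
  then show "(SOME z. z \<in> c) \<in> c" by (rule someI[of "\<lambda>z. z \<in> c"])
  have "cycles U k \<subseteq> chains U k" by (auto simp: cycles_def split: nat.splits)
  then show "c \<subseteq> chains U k" using c0 by (auto simp: hclass_def)
qed

lemma some_trace:
  assumes "v \<in> (\<lambda>W. W \<inter> F) ` U"
  shows "(SOME W'. W' \<in> U \<and> v = W' \<inter> F) \<in> U \<and> v = (SOME W'. W' \<in> U \<and> v = W' \<inter> F) \<inter> F"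
  using assms by (rule_tac someI_ex) auto

lemma cont_alg:
  fixes \<gamma> :: "'a set set \<Rightarrow> ('a set list \<Rightarrow> 'g::ab_group_add) set"
  assumes U: "finite U" and U': "finite U'"
    and hg: "\<gamma> ((\<lambda>W. W \<inter> F) ` U') \<in> hgroup ((\<lambda>W. W \<inter> F) ` U') k"
    and hgV: "\<gamma> ((\<lambda>W. W \<inter> F) ` U) \<in> hgroup ((\<lambda>W. W \<inter> F) ` U) k"
    and thread: "\<And>r. (\<forall>v\<in>(\<lambda>W. W \<inter> F) ` U'. r v \<in> (\<lambda>W. W \<inter> F) ` U \<and> v \<subseteq> r v) \<Longrightarrow>
        hmap ((\<lambda>W. W \<inter> F) ` U') ((\<lambda>W. W \<inter> F) ` U) r k (\<gamma> ((\<lambda>W. W \<inter> F) ` U')) = \<gamma> ((\<lambda>W. W \<inter> F) ` U)"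
    and hyp: "hmap ((\<lambda>W. W \<inter> F) ` U') U' (\<lambda>W. SOME W'. W' \<in> U' \<and> W = W' \<inter> F) k (\<gamma> ((\<lambda>W. W \<inter> F) ` U'))
              = bdries U' k"
    and qU: "\<forall>Y\<in>U'. q Y \<in> U"
    and qa: "\<forall>s. set s \<subseteq> U' \<and> \<Inter>(set s) \<noteq> {} \<longrightarrow> \<Inter>(set (map q s)) \<noteq> {}"
    and qb: "\<forall>Y\<in>U'. Y \<inter> F \<noteq> {} \<longrightarrow> Y \<inter> F \<subseteq> q Y \<and> (SOME W'. W' \<in> U \<and> q Y \<inter> F = W' \<inter> F) = q Y"
  shows "hmap ((\<lambda>W. W \<inter> F) ` U) U (\<lambda>W. SOME W'. W' \<in> U \<and> W = W' \<inter> F) k (\<gamma> ((\<lambda>W. W \<inter> F) ` U)) = bdries U k"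
proof -
  define V where "V = (\<lambda>W. W \<inter> F) ` U"
  define V' where "V' = (\<lambda>W. W \<inter> F) ` U'"
  define p where "p = (\<lambda>W. SOME W'. W' \<in> U \<and> W = W' \<inter> F)"
  define p' where "p' = (\<lambda>W. SOME W'. W' \<in> U' \<and> W = W' \<inter> F)"
  define r where "r = (\<lambda>v. q (p' v) \<inter> F)"
  have fV: "finite V" "finite V'" using U U' by (auto simp: V_def V'_def)
  have p'v: "p' v \<in> U' \<and> v = p' v \<inter> F" if "v \<in> V'" for v
    using some_trace[of v F U'] that by (simp add: p'_def V'_def)
  have pv: "p v \<in> U \<and> v = p v \<inter> F" if "v \<in> V" for v
    using some_trace[of v F U] that by (simp add: p_def V_def)
  have smq: "smap U' U q j" for j
    unfolding smap_def nsimp_def using qU qa by auto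
  have smp': "smap V' U' p' j" for j
    by (rule smap_ref) (use p'v in blast)
  have rV: "\<forall>v\<in>V'. r v \<in> V \<and> v \<subseteq> r v"
  proof
    fix v assume v: "v \<in> V'"
    have "r v \<in> V" using p'v[OF v] qU by (auto simp: r_def V_def)
    moreover have "v \<subseteq> r v"
    proof (cases "v = {}")
      case False
      then have "p' v \<inter> F \<noteq> {}" using p'v[OF v] by auto
      then have "p' v \<inter> F \<subseteq> q (p' v)" using qb p'v[OF v] by blast
      then show ?thesis using p'v[OF v] by (auto simp: r_def)
    qed simp
    ultimately show "r v \<in> V \<and> v \<subseteq> r v" ..
  qed
  have smr: "smap V' V r j" for j by (rule smap_ref[OF rV])
  have smp: "smap V U p j" for j by (rule smap_ref) (use pv in blast)
  define z' where "z' = (SOME z. z \<in> \<gamma> V')"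
  have z': "z' \<in> \<gamma> V'" using hgroup_some(1)[OF hg] by (simp add: z'_def V'_def)
  define x where "x = chmap V' p' k z'"
  have "hclass U' k x = bdries U' k" using hyp by (simp add: hmap_def x_def z'_def V'_def p'_def)
  then have x: "x \<in> bdries U' k" by (rule hclass_eq_bdries)
  have qx: "chmap U' q k x \<in> bdries U k" by (rule chmap_bdries[OF U' U smq x])
  define y where "y = chmap V' r k z'"
  have "chmap U' q k x = chmap V' (q \<circ> p') k z'"
    unfolding x_def by (rule chmap_comp[OF fV(2) U' smp'])
  also have "\<dots> = chmap V' (p \<circ> r) k z'"
  proof (rule chmap_cong)
    fix s assume s: "nsimp V' k s"
    show "map (q \<circ> p') s = map (p \<circ> r) s"
    proof (rule map_cong[OF refl])
      fix v assume vs: "v \<in> set s"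
      have vV: "v \<in> V'" using s vs by (auto simp: nsimp_def)
      have "v \<noteq> {}" using s vs by (auto simp: nsimp_def)
      then have "p' v \<inter> F \<noteq> {}" using p'v[OF vV] by auto
      then have "(SOME W'. W' \<in> U \<and> q (p' v) \<inter> F = W' \<inter> F) = q (p' v)" using qb p'v[OF vV] by blast
      then show "(q \<circ> p') v = (p \<circ> r) v" by (simp add: p_def r_def)
    qed
  qed
  also have "\<dots> = chmap V p k y"
    unfolding y_def by (rule chmap_comp[OF fV(2) fV(1) smr, symmetric])
  finally have py: "chmap V p k y \<in> bdries U k" using qx by simp
  have "hmap V' V r k (\<gamma> V') = \<gamma> V" using thread[of r] rV by (simp add: V_def V'_def)
  then have cl: "hclass V k y = \<gamma> V" by (simp add: hmap_def y_def z'_def)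
  define z where "z = (SOME z. z \<in> \<gamma> V)"
  have "z \<in> hclass V k y" unfolding cl z_def using hgroup_some(1)[OF hgV] by (simp add: V_def)
  then have zy: "(\<lambda>s. z s - y s) \<in> bdries V k" by (simp add: hclass_def)
  have "chmap V p k (\<lambda>s. z s - y s) \<in> bdries U k"
    by (rule chmap_bdries[OF fV(1) U smp zy])
  then have "(\<lambda>t. chmap V p k z t - chmap V p k y t) \<in> bdries U k" by (simp add: chmap_diff)
  from bdries_add[OF this py] have "chmap V p k z \<in> bdries U k" by simp
  then have "hclass U k (chmap V p k z) = bdries U k" by (rule hclass_bdries[OF U])
  then show ?thesis by (simp add: hmap_def z_def V_def p_def)
qed

lemma chain_compact:
  assumes T: "compact_space T" and C: "C \<noteq> {}" "\<forall>K\<in>C. closedin T K"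
    and ch: "\<forall>A\<in>C. \<forall>B\<in>C. A \<subseteq> B \<or> B \<subseteq> A"
    and Z: "closedin T Z" "Z \<inter> \<Inter>C = {}"
  shows "\<exists>K\<in>C. Z \<inter> K = {}"
proof -
  have "\<not> (\<forall>\<F>. finite \<F> \<and> \<F> \<subseteq> insert Z C \<longrightarrow> \<Inter>\<F> \<noteq> {})"
  proof
    assume "\<forall>\<F>. finite \<F> \<and> \<F> \<subseteq> insert Z C \<longrightarrow> \<Inter>\<F> \<noteq> {}"
    moreover have "\<forall>A\<in>insert Z C. closedin T A" using C Z by auto
    ultimately have "(\<forall>A\<in>insert Z C. closedin T A) \<and> (\<forall>\<F>. finite \<F> \<and> \<F> \<subseteq> insert Z C \<longrightarrow> \<Inter>\<F> \<noteq> {})"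
      by (intro conjI)
    from mp[OF spec[OF T[unfolded compact_space_fip], of "insert Z C"] this]
    have "\<Inter>(insert Z C) \<noteq> {}" .
    then show False using Z by auto
  qed
  then obtain \<F> where F: "finite \<F>" "\<F> \<subseteq> insert Z C" "\<Inter>\<F> = {}" by blast
  show ?thesis
  proof (cases "\<F> - {Z} = {}")
    case True
    then have "\<F> \<subseteq> {Z}" by auto
    then have "Z = {}" using F(3) by (metis Inter_empty UNIV_not_empty cInf_singleton subset_singletonD)
    then show ?thesis using C by auto
  next
    case False
    obtain m where m: "m \<in> \<F> - {Z}" "\<forall>b\<in>\<F> - {Z}. b \<le> m \<longrightarrow> m = b"
      using finite_has_minimal[of "\<F> - {Z}"] F False by blast
    have mC: "m \<in> C" using m F by auto
    have "\<forall>b\<in>\<F> - {Z}. m \<subseteq> b"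
    proof
      fix b assume b: "b \<in> \<F> - {Z}"
      then have "b \<in> C" using F by auto
      then have "b \<subseteq> m \<or> m \<subseteq> b" using ch mC by simp
      moreover have "b \<subseteq> m \<longrightarrow> m = b" using m(2) b by simp
      ultimately show "m \<subseteq> b" by auto
    qed
    then have "Z \<inter> m \<subseteq> \<Inter>\<F>" using F(2) by auto
    then show ?thesis using mC F(3) by auto
  qed
qed

lemma ocover_trace:
  assumes "ocover T K U" "F \<subseteq> K"
  shows "ocover T F ((\<lambda>W. W \<inter> F) ` U)"
proof -
  have "openin (subtopology T F) (W \<inter> F)" if "W \<in> U" for W
  proof -
    have "openin (subtopology T K) W" using assms(1) that by (simp add: ocover_def)
    then obtain G where "openin T G" "W = G \<inter> K" by (auto simp: openin_subtopology)
    then have "W \<inter> F = G \<inter> F" using assms by auto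
    then show ?thesis using \<open>openin T G\<close> openin_subtopology by blast
  qed
  then show ?thesis using assms by (auto simp: ocover_def)
qed

lemma cont_top:
  fixes T :: "'a topology"
  assumes T: "compact_space T" "Hausdorff_space T"
    and C: "C \<noteq> {}" "\<forall>K\<in>C. closedin T K \<and> F \<subseteq> K"
    and ch: "\<forall>A\<in>C. \<forall>B\<in>C. A \<subseteq> B \<or> B \<subseteq> A"
    and cF: "closedin T F"
    and U: "ocover T (\<Inter>C) U"
  shows "\<exists>K\<in>C. \<exists>U' q. ocover T K U' \<and> (\<forall>Y\<in>U'. q Y \<in> U) \<and>
     (\<forall>s. set s \<subseteq> U' \<and> \<Inter>(set s) \<noteq> {} \<longrightarrow> \<Inter>(set (map q s)) \<noteq> {}) \<and>
     (\<forall>Y\<in>U'. Y \<inter> F \<noteq> {} \<longrightarrow> Y \<inter> F \<subseteq> q Y \<and> (SOME W'. W' \<in> U \<and> q Y \<inter> F = W' \<inter> F) = q Y)"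
proof -
  define K0 where "K0 = \<Inter>C"
  have K0top: "K0 \<subseteq> topspace T" using C closedin_subset by (fastforce simp: K0_def)
  have FK0: "F \<subseteq> K0" using C by (auto simp: K0_def)
  have cK0: "closedin T K0" using C unfolding K0_def by (intro closedin_Inter) auto
  have fU: "finite U" and oU: "\<forall>W\<in>U. openin (subtopology T K0) W" and uU: "\<Union>U = K0"
    using U by (auto simp: ocover_def K0_def)
  define p where "p = (\<lambda>W. SOME W'. W' \<in> U \<and> W = W' \<inter> F)"
  define V where "V = (\<lambda>W. W \<inter> F) ` U"
  have pv: "p v \<in> U \<and> v = p v \<inter> F" if "v \<in> V" for v
    unfolding p_def using that by (rule_tac someI_ex) (auto simp: V_def)
  define Uh where "Uh = p ` V \<union> (\<lambda>W. W - F) ` U"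
  have Uh_fin: "finite Uh" using fU by (simp add: Uh_def V_def)
  have Uh_open: "openin (subtopology T K0) Wh" if hW: "Wh \<in> Uh" for Wh
  proof -
    consider (a) v where "v \<in> V" "Wh = p v" | (b) W where "W \<in> U" "Wh = W - F"
      using hW unfolding Uh_def by blast
    then show ?thesis
    proof cases
      case a then show ?thesis using pv oU by auto
    next
      case b
      then obtain G where G: "openin T G" "W = G \<inter> K0" using oU by (auto simp: openin_subtopology)
      then have "Wh = (G - F) \<inter> K0" using b by auto
      moreover have "openin T (G - F)" using G cF by auto
      ultimately show ?thesis by (auto simp: openin_subtopology)
    qed
  qed
  have Uh_sub: "Wh \<subseteq> K0" if "Wh \<in> Uh" for Wh
    using openin_subset[OF Uh_open[OF that]] by auto
  have Uh_cov: "K0 \<subseteq> \<Union>Uh"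
  proof
    fix x assume "x \<in> K0"
    then obtain W where W: "W \<in> U" "x \<in> W" using uU by auto
    show "x \<in> \<Union>Uh"
    proof (cases "x \<in> F")
      case True
      have v: "W \<inter> F \<in> V" using W by (auto simp: V_def)
      then have "x \<in> p (W \<inter> F)" using pv[OF v] True W by blast
      then show ?thesis using v by (auto simp: Uh_def)
    next
      case False
      then show ?thesis using W by (auto simp: Uh_def)
    qed
  qed
  have trace: "Wh \<in> U \<and> (SOME W'. W' \<in> U \<and> Wh \<inter> F = W' \<inter> F) = Wh"
    if "Wh \<in> Uh" "Wh \<inter> F \<noteq> {}" for Wh
  proof -
    have "Wh \<in> p ` V" using that unfolding Uh_def by blast
    then obtain v where v: "v \<in> V" "Wh = p v" by blast
    have "Wh \<inter> F = v" using pv[OF v(1)] v by auto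
    then show ?thesis using pv[OF v(1)] v by (simp add: p_def)
  qed
  have "\<forall>Wh\<in>Uh. \<exists>G. openin T G \<and> Wh = G \<inter> K0"
    using Uh_open by (auto simp: openin_subtopology)
  then obtain G where G: "\<forall>Wh\<in>Uh. openin T (G Wh) \<and> Wh = G Wh \<inter> K0" by metis
  have reg: "regular_space T" by (rule compact_Hausdorff_imp_regular_space[OF T])
  have tex: "\<forall>x\<in>K0. \<exists>t. fst t \<in> Uh \<and> x \<in> fst t \<and> openin T (fst (snd t)) \<and> closedin T (snd (snd t)) \<and>
       x \<in> fst (snd t) \<and> fst (snd t) \<subseteq> snd (snd t) \<and> snd (snd t) \<subseteq> G (fst t)"
  proof
    fix x assume x: "x \<in> K0"
    then obtain Wh where Wh: "Wh \<in> Uh" "x \<in> Wh" using Uh_cov by auto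
    have oG: "openin T (G Wh)" and xG: "x \<in> G Wh" using G Wh by auto
    have "closedin T (topspace T - G Wh)" using oG by auto
    moreover have "x \<in> topspace T - (topspace T - G Wh)" using xG K0top x by auto
    ultimately obtain N M where NM: "openin T N" "openin T M" "x \<in> N" "topspace T - G Wh \<subseteq> M" "disjnt N M"
      using reg unfolding regular_space_def by metis
    have "N \<subseteq> topspace T - M" using NM openin_subset[OF NM(1)] by (auto simp: disjnt_def)
    moreover have "topspace T - M \<subseteq> G Wh" using NM by auto
    moreover have "closedin T (topspace T - M)" using NM by auto
    ultimately show "\<exists>t. fst t \<in> Uh \<and> x \<in> fst t \<and> openin T (fst (snd t)) \<and> closedin T (snd (snd t)) \<and>
       x \<in> fst (snd t) \<and> fst (snd t) \<subseteq> snd (snd t) \<and> snd (snd t) \<subseteq> G (fst t)"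
      using Wh NM by (rule_tac x="(Wh, N, topspace T - M)" in exI) auto
  qed
  then obtain t where t: "\<forall>x\<in>K0. fst (t x) \<in> Uh \<and> x \<in> fst (t x) \<and> openin T (fst (snd (t x))) \<and>
      closedin T (snd (snd (t x))) \<and> x \<in> fst (snd (t x)) \<and> fst (snd (t x)) \<subseteq> snd (snd (t x)) \<and>
      snd (snd (t x)) \<subseteq> G (fst (t x))"
    using bchoice[OF tex] by (elim exE) (rule that)
  define wh where "wh x = fst (t x)" for x
  define N where "N x = fst (snd (t x))" for x
  define E where "E x = snd (snd (t x))" for x
  have cpt: "compactin T K0" by (rule closedin_compact_space[OF T(1) cK0])
  have "\<exists>Fs. finite Fs \<and> Fs \<subseteq> N ` K0 \<and> K0 \<subseteq> \<Union>Fs"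
  proof -
    have all: "\<forall>\<U>. (\<forall>U\<in>\<U>. openin T U) \<and> K0 \<subseteq> \<Union>\<U> \<longrightarrow> (\<exists>\<F>. finite \<F> \<and> \<F> \<subseteq> \<U> \<and> K0 \<subseteq> \<Union>\<F>)"
      using cpt unfolding compactin_def by (rule conjunct2)
    have "(\<forall>U\<in>N ` K0. openin T U) \<and> K0 \<subseteq> \<Union>(N ` K0)"
    proof
      show "\<forall>U\<in>N ` K0. openin T U" using t by (simp add: N_def)
      show "K0 \<subseteq> \<Union>(N ` K0)"
      proof
        fix x assume "x \<in> K0"
        then have "x \<in> N x" using t by (simp add: N_def)
        then show "x \<in> \<Union>(N ` K0)" using \<open>x \<in> K0\<close> by blast
      qed
    qed
    from mp[OF spec[OF all, of "N ` K0"] this] show ?thesis .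
  qed
  then obtain Fs where Fs: "finite Fs" "Fs \<subseteq> N ` K0" "K0 \<subseteq> \<Union>Fs" by blast
  obtain Xf where Xf: "Xf \<subseteq> K0" "finite Xf" "Fs = N ` Xf" using finite_subset_image[OF Fs(1,2)] by blast
  define Op where "Op W = \<Union>(N ` {x\<in>Xf. wh x = W})" for W
  define D where "D W = \<Union>(E ` {x\<in>Xf. wh x = W})" for W
  have oO: "openin T (Op W)" for W unfolding Op_def using t Xf by (intro openin_Union) (auto simp: N_def)
  have cD: "closedin T (D W)" for W unfolding D_def using t Xf by (intro closedin_Union) (auto simp: E_def)
  have OD: "Op W \<subseteq> D W" for W using t Xf by (auto simp: Op_def D_def N_def E_def)
  have DG: "D W \<subseteq> G W" for W using t Xf by (auto simp: D_def E_def wh_def)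
  have K0Op: "K0 \<subseteq> \<Union>(Op ` Uh)"
  proof
    fix x assume "x \<in> K0"
    then obtain x' where x': "x' \<in> Xf" "x \<in> N x'" using Fs Xf by auto
    then have "wh x' \<in> Uh" using t Xf by (auto simp: wh_def)
    moreover have "x \<in> Op (wh x')" using x' by (auto simp: Op_def)
    ultimately show "x \<in> \<Union>(Op ` Uh)" by auto
  qed
  define Z where "Z = (topspace T - \<Union>(Op ` Uh)) \<union> \<Union>((\<lambda>S. \<Inter>(D ` S)) ` {S. S \<subseteq> Uh \<and> S \<noteq> {} \<and> \<Inter>S = {}})"
  have cZ: "closedin T Z"
  proof -
    have "closedin T (topspace T - \<Union>(Op ` Uh))" using oO by (intro closedin_diff openin_Union) auto
    moreover have "closedin T (\<Union>((\<lambda>S. \<Inter>(D ` S)) ` {S. S \<subseteq> Uh \<and> S \<noteq> {} \<and> \<Inter>S = {}}))"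
      using Uh_fin cD by (intro closedin_Union) (auto intro!: closedin_Inter)
    ultimately show ?thesis by (auto simp: Z_def)
  qed
  have ZK0: "Z \<inter> \<Inter>C = {}"
  proof -
    have "x \<notin> Z" if x: "x \<in> K0" for x
    proof
      assume "x \<in> Z"
      moreover have "x \<in> \<Union>(Op ` Uh)" using K0Op x by auto
      ultimately obtain S where S: "S \<subseteq> Uh" "S \<noteq> {}" "\<Inter>S = {}" "x \<in> \<Inter>(D ` S)" by (auto simp: Z_def)
      have xW: "x \<in> W" if "W \<in> S" for W using S that DG G x by blast
      have "x \<in> \<Inter>S" using xW by blast
      then show False using S(3) by simp
    qed
    then show ?thesis by (auto simp: K0_def)
  qed
  obtain K where K: "K \<in> C" "Z \<inter> K = {}"
    using chain_compact[OF T(1) C(1) _ ch cZ ZK0] C(2) by blast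
  have Ktop: "K \<subseteq> topspace T" using K C closedin_subset by blast
  have KO: "K \<subseteq> \<Union>(Op ` Uh)" using K Ktop by (auto simp: Z_def)
  define U' where "U' = (\<lambda>W. Op W \<inter> K) ` Uh"
  define \<sigma> where "\<sigma> Y = (SOME W. W \<in> Uh \<and> Y = Op W \<inter> K)" for Y
  have \<sigma>: "\<sigma> Y \<in> Uh \<and> Y = Op (\<sigma> Y) \<inter> K" if "Y \<in> U'" for Y
    unfolding \<sigma>_def using that by (rule_tac someI_ex) (auto simp: U'_def)
  define \<iota> where "\<iota> Wh = (SOME W. W \<in> U \<and> Wh \<subseteq> W \<and> (Wh \<inter> F \<noteq> {} \<longrightarrow> W = Wh))" for Wh
  have \<iota>: "\<iota> Wh \<in> U \<and> Wh \<subseteq> \<iota> Wh \<and> (Wh \<inter> F \<noteq> {} \<longrightarrow> \<iota> Wh = Wh)" if hW: "Wh \<in> Uh" for Wh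
    unfolding \<iota>_def
  proof (rule someI_ex)
    show "\<exists>W. W \<in> U \<and> Wh \<subseteq> W \<and> (Wh \<inter> F \<noteq> {} \<longrightarrow> W = Wh)"
    proof (cases "Wh \<inter> F = {}")
      case False then show ?thesis using trace[OF hW] by blast
    next
      case True
      consider (a) v where "v \<in> V" "Wh = p v" | (b) W where "W \<in> U" "Wh = W - F"
        using hW unfolding Uh_def by blast
      then show ?thesis
      proof cases
        case a then show ?thesis using pv True by blast
      next
        case b then show ?thesis using True by blast
      qed
    qed
  qed
  define q where "q Y = \<iota> (\<sigma> Y)" for Y
  have ocK: "ocover T K U'"
  proof -
    have "finite U'" using Uh_fin by (simp add: U'_def)
    moreover have "\<forall>Y\<in>U'. openin (subtopology T K) Y"
      using oO by (auto simp: U'_def openin_subtopology)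
    moreover have "\<Union>U' = K" using KO by (auto simp: U'_def)
    ultimately show ?thesis by (simp add: ocover_def)
  qed
  have qU: "\<forall>Y\<in>U'. q Y \<in> U" using \<sigma> \<iota> by (auto simp: q_def)
  have qa: "\<forall>s. set s \<subseteq> U' \<and> \<Inter>(set s) \<noteq> {} \<longrightarrow> \<Inter>(set (map q s)) \<noteq> {}"
  proof (intro allI impI)
    fix s assume s: "set s \<subseteq> U' \<and> \<Inter>(set s) \<noteq> {}"
    show "\<Inter>(set (map q s)) \<noteq> {}"
    proof (cases "s = []")
      case False
      obtain x where x: "x \<in> \<Inter>(set s)" using s by auto
      define S where "S = \<sigma> ` set s"
      have S: "S \<subseteq> Uh" "S \<noteq> {}" using s \<sigma> False by (auto simp: S_def)
      have xD: "x \<in> \<Inter>(D ` S)"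
      proof
        fix W assume "W \<in> S"
        then obtain Y where Y: "Y \<in> set s" "W = \<sigma> Y" by (auto simp: S_def)
        have "x \<in> Y" using x Y by auto
        then have "x \<in> Op (\<sigma> Y)" using \<sigma>[of Y] Y s by auto
        then show "x \<in> D W" using OD Y by auto
      qed
      have xK: "x \<in> K"
      proof -
        obtain Y where "Y \<in> set s" using False by (cases s) auto
        then show ?thesis using x \<sigma>[of Y] s by auto
      qed
      have "\<Inter>S \<noteq> {}"
      proof
        assume "\<Inter>S = {}"
        then have "x \<in> Z" using S xD by (auto simp: Z_def)
        then show False using K xK by auto
      qed
      then obtain y where y: "y \<in> \<Inter>S" by auto
      have "y \<in> \<Inter>(set (map q s))"
      proof
        fix A assume "A \<in> set (map q s)"
        then obtain Y where Y: "Y \<in> set s" "A = \<iota> (\<sigma> Y)" by (auto simp: q_def)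
        have "\<sigma> Y \<in> Uh" using \<sigma> Y s by auto
        moreover have "y \<in> \<sigma> Y" using y Y by (auto simp: S_def)
        ultimately show "y \<in> A" using \<iota> Y by blast
      qed
      then show ?thesis by auto
    qed simp
  qed
  have qb: "\<forall>Y\<in>U'. Y \<inter> F \<noteq> {} \<longrightarrow> Y \<inter> F \<subseteq> q Y \<and> (SOME W'. W' \<in> U \<and> q Y \<inter> F = W' \<inter> F) = q Y"
  proof (intro ballI impI)
    fix Y assume Y: "Y \<in> U'" "Y \<inter> F \<noteq> {}"
    define Wh where "Wh = \<sigma> Y"
    have Wh: "Wh \<in> Uh" "Y = Op Wh \<inter> K" using \<sigma>[OF Y(1)] by (auto simp: Wh_def)
    have "Y \<inter> F \<subseteq> G Wh \<inter> K0" using Wh OD DG FK0 by blast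
    then have YW: "Y \<inter> F \<subseteq> Wh" using G Wh by auto
    then have "Wh \<inter> F \<noteq> {}" using Y by auto
    then have "q Y = Wh" using \<iota>[OF Wh(1)] by (simp add: q_def Wh_def)
    then show "Y \<inter> F \<subseteq> q Y \<and> (SOME W'. W' \<in> U \<and> q Y \<inter> F = W' \<inter> F) = q Y"
      using YW trace[OF Wh(1) \<open>Wh \<inter> F \<noteq> {}\<close>] by simp
  qed
  show ?thesis using K(1) ocK qU qa qb by blast
qed


theorem corollary2p7:
  fixes T :: "'a topology" and n :: nat
  assumes "Hausdorff_space T" and "compact_space T"
    and "n \<in> HXG T TYPE('g::ab_group_add)"
  shows "\<exists>F K. closedin T F \<and> closedin T K \<and> F \<subseteq> K \<and>
           (\<exists>\<gamma>::'a set set \<Rightarrow> ('a set list \<Rightarrow> 'g) set.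
              \<gamma> \<in> cech T F (n - 1) \<and> \<gamma> \<noteq> czero T F (n - 1) \<and> membrane T F K (n - 1) \<gamma>)"
proof -
  define k where "k = n - 1"
  from assms(3) obtain F and \<gamma> :: "'a set set \<Rightarrow> ('a set list \<Rightarrow> 'g) set" where
    F: "closedin T F" and \<gamma>: "\<gamma> \<in> cech T F k" "\<gamma> \<noteq> czero T F k"
      "incl T F (topspace T) k \<gamma> = czero T (topspace T) k"
    unfolding HXG_def k_def by blast
  define KK where "KK = {K. closedin T K \<and> F \<subseteq> K \<and> incl T F K k \<gamma> = czero T K k}"
  have X: "topspace T \<in> KK" using F \<gamma> closedin_subset by (auto simp: KK_def)
  have lim: "\<Inter>C \<in> KK" if C: "C \<noteq> {}" "C \<subseteq> KK" and ch: "\<forall>A\<in>C. \<forall>B\<in>C. A \<subseteq> B \<or> B \<subseteq> A" for C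
  proof -
    have Cc: "\<forall>K\<in>C. closedin T K \<and> F \<subseteq> K" using C by (auto simp: KK_def)
    have "closedin T (\<Inter>C)" using C Cc by (intro closedin_Inter) auto
    moreover have FC: "F \<subseteq> \<Inter>C" using Cc by auto
    moreover have "incl T F (\<Inter>C) k \<gamma> = czero T (\<Inter>C) k"
    proof
      fix U
      show "incl T F (\<Inter>C) k \<gamma> U = czero T (\<Inter>C) k U"
      proof (cases "ocover T (\<Inter>C) U")
        case False then show ?thesis by (simp add: incl_def czero_def)
      next
        case True
        obtain K U' q where K: "K \<in> C" and ocK: "ocover T K U'" and qU: "\<forall>Y\<in>U'. q Y \<in> U"
          and qa: "\<forall>s. set s \<subseteq> U' \<and> \<Inter>(set s) \<noteq> {} \<longrightarrow> \<Inter>(set (map q s)) \<noteq> {}"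
          and qb: "\<forall>Y\<in>U'. Y \<inter> F \<noteq> {} \<longrightarrow> Y \<inter> F \<subseteq> q Y \<and> (SOME W'. W' \<in> U \<and> q Y \<inter> F = W' \<inter> F) = q Y"
          using cont_top[OF assms(2) assms(1) C(1) Cc ch F True] by (elim bexE exE conjE) (rule that, assumption+)
        have KF: "F \<subseteq> K" using K Cc by auto
        have ocV: "ocover T F ((\<lambda>W. W \<inter> F) ` U)" by (rule ocover_trace[OF True FC])
        have ocV': "ocover T F ((\<lambda>W. W \<inter> F) ` U')" by (rule ocover_trace[OF ocK KF])
        have "incl T F K k \<gamma> U' = czero T K k U'" using K C by (auto simp: KK_def)
        then have hyp: "hmap ((\<lambda>W. W \<inter> F) ` U') U' (\<lambda>W. SOME W'. W' \<in> U' \<and> W = W' \<inter> F) k (\<gamma> ((\<lambda>W. W \<inter> F) ` U'))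
              = bdries U' k" using ocK by (simp add: incl_def czero_def)
        have "hmap ((\<lambda>W. W \<inter> F) ` U) U (\<lambda>W. SOME W'. W' \<in> U \<and> W = W' \<inter> F) k (\<gamma> ((\<lambda>W. W \<inter> F) ` U)) = bdries U k"
        proof (rule cont_alg[where U=U and U'=U' and \<gamma>=\<gamma> and F=F and k=k and q=q, OF _ _ _ _ _ hyp qU qa qb])
          show "finite U" using True by (simp add: ocover_def)
          show "finite U'" using ocK by (simp add: ocover_def)
          show "\<gamma> ((\<lambda>W. W \<inter> F) ` U') \<in> hgroup ((\<lambda>W. W \<inter> F) ` U') k" using \<gamma>(1) ocV' by (simp add: cech_def)
          show "\<gamma> ((\<lambda>W. W \<inter> F) ` U) \<in> hgroup ((\<lambda>W. W \<inter> F) ` U) k" using \<gamma>(1) ocV by (simp add: cech_def)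
          fix r assume "\<forall>v\<in>(\<lambda>W. W \<inter> F) ` U'. r v \<in> (\<lambda>W. W \<inter> F) ` U \<and> v \<subseteq> r v"
          then show "hmap ((\<lambda>W. W \<inter> F) ` U') ((\<lambda>W. W \<inter> F) ` U) r k (\<gamma> ((\<lambda>W. W \<inter> F) ` U')) = \<gamma> ((\<lambda>W. W \<inter> F) ` U)"
            using \<gamma>(1) ocV ocV' unfolding cech_def by blast
        qed
        then show ?thesis using True by (simp add: incl_def czero_def)
      qed
    qed
    ultimately show ?thesis by (simp add: KK_def)
  qed
  define A where "A = (\<lambda>K. topspace T - K) ` KK"
  have KKtop: "K \<subseteq> topspace T" if "K \<in> KK" for K using that closedin_subset by (auto simp: KK_def)
  have "\<forall>CC\<in>Zorn.chains A. \<Union>CC \<in> A"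
  proof
    fix CC assume "CC \<in> Zorn.chains A"
    then have sub: "CC \<subseteq> A" and ch: "\<forall>x\<in>CC. \<forall>y\<in>CC. x \<subseteq> y \<or> y \<subseteq> x"
      by (auto simp: Zorn.chains_def chain_subset_def)
    show "\<Union>CC \<in> A"
    proof (cases "CC = {}")
      case True
      then show ?thesis using X by (auto simp: A_def intro!: image_eqI[where x="topspace T"])
    next
      case False
      define C where "C = (\<lambda>M. topspace T - M) ` CC"
      have CKK: "C \<subseteq> KK"
      proof
        fix K assume "K \<in> C"
        then obtain M where M: "M \<in> CC" "K = topspace T - M" by (auto simp: C_def)
        then obtain K' where "K' \<in> KK" "M = topspace T - K'" using sub by (auto simp: A_def)
        then show "K \<in> KK" using M KKtop by (simp add: Diff_Diff_Int Int_absorb1)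
      qed
      have Mtop: "M \<subseteq> topspace T" if "M \<in> CC" for M using that sub by (auto simp: A_def)
      have chC: "\<forall>A\<in>C. \<forall>B\<in>C. A \<subseteq> B \<or> B \<subseteq> A" using ch by (auto simp: C_def)
      have "\<Inter>C \<in> KK" using lim[OF _ CKK chC] False by (simp add: C_def)
      moreover have "\<Union>CC = topspace T - \<Inter>C" using Mtop False by (auto simp: C_def)
      ultimately show ?thesis by (auto simp: A_def)
    qed
  qed
  then obtain M where M: "M \<in> A" "\<forall>X\<in>A. M \<subseteq> X \<longrightarrow> X = M" using Zorn_Lemma by blast
  then obtain Km where Km: "Km \<in> KK" "M = topspace T - Km" by (auto simp: A_def)
  have memb: "membrane T F Km k \<gamma>"
    unfolding membrane_def
  proof (intro conjI allI impI)
    show "closedin T F" by (rule F)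
    show "closedin T Km" "F \<subseteq> Km" "incl T F Km k \<gamma> = czero T Km k" using Km by (auto simp: KK_def)
    fix K' assume K': "closedin T K' \<and> F \<subseteq> K' \<and> K' \<subset> Km"
    show "incl T F K' k \<gamma> \<noteq> czero T K' k"
    proof
      assume "incl T F K' k \<gamma> = czero T K' k"
      then have "K' \<in> KK" using K' by (simp add: KK_def)
      then have "topspace T - K' \<in> A" by (simp add: A_def)
      moreover have "M \<subseteq> topspace T - K'" using Km K' by auto
      ultimately have "topspace T - K' = topspace T - Km" using M Km by auto
      then show False using K' KKtop[OF Km(1)] by auto
    qed
  qed
  show ?thesis
    using F Km \<gamma> memb by (auto simp: KK_def k_def)
qed

end
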